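(* Let $G$ be a finite group and let $H$ be a $2$-subgroup of $G$. Then $H$ is a perfect code of $G$ if and only if, for each $a\in N_G(H)\setminus H$ with $a^2\in H$, the subgroup $H$ has a complement in $H\langle a\rangle$.
   Context: For a group $G$ with identity $e$ and an inverse-closed subset $S\subseteq G\setminus\{e\}$, the Cayley graph $\mathrm{Cay}(G,S)$ has vertex set $G$ and edges $\{g,sg\}$ for $s\in S$, $g\in G$. A perfect code in a graph is an independent set $C$ of vertices such that every vertex outside $C$ is adjacent to exactly one vertex of $C$. A subgroup $H$ of $G$ is a perfect code of $G$ if some Cayley graph of $G$ admits $H$ as a perfect code. $N_G(H)$ is the normalizer of $H$ in $G$. *)

theory Defs
  imports "HOL-Algebra.Algebra"
begin

definition cay_adj :: "('a, 'b) monoid_scheme \<Rightarrow> 'a set \<Rightarrow> 'a \<Rightarrow> 'a \<Rightarrow> bool" where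
  "cay_adj G S x y \<longleftrightarrow> x \<in> carrier G \<and> y \<in> carrier G \<and>
     (\<exists>s\<in>S. y = s \<otimes>\<^bsub>G\<^esub> x)"

definition cayley_set :: "('a, 'b) monoid_scheme \<Rightarrow> 'a set \<Rightarrow> bool" where
  "cayley_set G S \<longleftrightarrow> S \<subseteq> carrier G - {\<one>\<^bsub>G\<^esub>} \<and>
     (\<forall>s\<in>S. inv\<^bsub>G\<^esub> s \<in> S)"

definition cay_perfect_code :: "('a, 'b) monoid_scheme \<Rightarrow> 'a set \<Rightarrow> 'a set \<Rightarrow> bool" where
  "cay_perfect_code G S C \<longleftrightarrow> C \<subseteq> carrier G \<and>
     (\<forall>x\<in>C. \<forall>y\<in>C. \<not> cay_adj G S x y) \<and>
     (\<forall>v\<in>carrier G - C. \<exists>!c. c \<in> C \<and> cay_adj G S v c)"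

definition subgroup_perfect_code :: "('a, 'b) monoid_scheme \<Rightarrow> 'a set \<Rightarrow> bool" where
  "subgroup_perfect_code G H \<longleftrightarrow> (\<exists>S. cayley_set G S \<and> cay_perfect_code G S H)"

definition is_complement :: "('a, 'b) monoid_scheme \<Rightarrow> 'a set \<Rightarrow> 'a set \<Rightarrow> 'a set \<Rightarrow> bool" where
  "is_complement G K H L \<longleftrightarrow> subgroup L G \<and> L \<subseteq> K \<and>
     H \<inter> L = {\<one>\<^bsub>G\<^esub>} \<and> H <#>\<^bsub>G\<^esub> L = K"

end

theory Submission imports Defs begin
locale pcode = group G for G (structure) +
  fixes H assumes subH: "subgroup H G" and finG: "finite (carrier G)"
begin
lemma HG: "H \<subseteq> carrier G" using subH subgroup.subset by blast
lemma finH: "finite H" by (rule finite_subset[OF HG finG])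
lemma Hm: "a \<in> H \<Longrightarrow> b \<in> H \<Longrightarrow> a \<otimes> b \<in> H" by (rule subgroup.m_closed[OF subH])
lemma Hi: "a \<in> H \<Longrightarrow> inv a \<in> H" by (rule subgroup.m_inv_closed[OF subH])
lemma H1: "\<one> \<in> H" by (rule subgroup.one_closed[OF subH])
lemma Hc: "a \<in> H \<Longrightarrow> a \<in> carrier G" using HG by blast
lemma canc1[simp]: "a \<in> carrier G \<Longrightarrow> b \<in> carrier G \<Longrightarrow> inv a \<otimes> (a \<otimes> b) = b"
  by (simp add: m_assoc[symmetric])
lemma canc2[simp]: "a \<in> carrier G \<Longrightarrow> b \<in> carrier G \<Longrightarrow> a \<otimes> (inv a \<otimes> b) = b"
  by (simp add: m_assoc[symmetric])
lemma rcos_mem: "y \<in> H #> x \<longleftrightarrow> (\<exists>h\<in>H. y = h \<otimes> x)"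
  by (auto simp: r_coset_def)

lemma rcos_self: "x \<in> carrier G \<Longrightarrow> x \<in> H #> x"
  unfolding rcos_mem using H1 by (metis l_one)

lemma rcos_sub: "x \<in> carrier G \<Longrightarrow> H #> x \<subseteq> carrier G"
  using Hc by (auto simp: rcos_mem)

lemma rcos_eq: assumes "x \<in> carrier G" "y \<in> carrier G"
  shows "H #> x = H #> y \<longleftrightarrow> x \<otimes> inv y \<in> H"
proof
  assume "H #> x = H #> y"
  then have "x \<in> H #> y" using rcos_self assms by blast
  then obtain h where h: "h \<in> H" "x = h \<otimes> y" by (auto simp: rcos_mem)
  then have "x \<otimes> inv y = h" using assms Hc[OF h(1)] by (simp add: m_assoc)
  then show "x \<otimes> inv y \<in> H" using h by simp
next
  assume a: "x \<otimes> inv y \<in> H"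
  define k where "k = x \<otimes> inv y"
  have k: "k \<in> H" "k \<in> carrier G" using a Hc k_def by auto
  have xe: "x = k \<otimes> y" using assms by (simp add: m_assoc k_def)
  show "H #> x = H #> y"
  proof (rule equalityI; rule subsetI)
      fix z assume "z \<in> H #> x"
      then obtain h where h: "h \<in> H" "z = h \<otimes> x" by (auto simp: rcos_mem)
      then have "z = (h \<otimes> k) \<otimes> y" using xe assms k Hc[OF h(1)] by (simp add: m_assoc)
      then show "z \<in> H #> y" using h k Hm by (auto simp: rcos_mem)
    next
      fix z assume "z \<in> H #> y"
      then obtain h where h: "h \<in> H" "z = h \<otimes> y" by (auto simp: rcos_mem)
      then have "z = (h \<otimes> inv k) \<otimes> x" using xe assms k Hc[OF h(1)] by (simp add: m_assoc)
      then show "z \<in> H #> x" using h k Hm Hi by (auto simp: rcos_mem)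
  qed
qed

lemma rcos_disj: assumes "x \<in> carrier G" "y \<in> carrier G" "H #> x \<noteq> H #> y"
  shows "(H #> x) \<inter> (H #> y) = {}"
proof (rule ccontr)
  assume "(H #> x) \<inter> (H #> y) \<noteq> {}"
  then obtain z where "z \<in> H #> x" "z \<in> H #> y" by blast
  then obtain h1 h2 where h: "h1 \<in> H" "h2 \<in> H" "z = h1 \<otimes> x" "z = h2 \<otimes> y" by (auto simp: rcos_mem)
  have c: "h1 \<in> carrier G" "h2 \<in> carrier G" using h Hc by auto
  have "x = inv h1 \<otimes> z" using h c assms by (simp add: m_assoc[symmetric])
  also have "\<dots> = (inv h1 \<otimes> h2) \<otimes> y" using h c assms by (simp add: m_assoc)
  finally have "x \<otimes> inv y = inv h1 \<otimes> h2" using assms c by (simp add: m_assoc)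
  then have "x \<otimes> inv y \<in> H" using h Hm Hi by simp
  then show False using assms rcos_eq by blast
qed

lemma card_rcos: "x \<in> carrier G \<Longrightarrow> card (H #> x) = card H"
  using card_rcosets_equal[of "H #> x" H] HG rcosetsI by auto

definition dc where "dc x = {h1 \<otimes> x \<otimes> h2 | h1 h2. h1 \<in> H \<and> h2 \<in> H}"

lemma dc_mem: "y \<in> dc x \<longleftrightarrow> (\<exists>h1\<in>H. \<exists>h2\<in>H. y = h1 \<otimes> x \<otimes> h2)"
  by (auto simp: dc_def)

lemma dc_sub: "x \<in> carrier G \<Longrightarrow> dc x \<subseteq> carrier G"
  using Hc by (auto simp: dc_mem)

lemma dc_self: "x \<in> carrier G \<Longrightarrow> x \<in> dc x"
  unfolding dc_mem using H1 by (metis l_one r_one)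

lemma dc_trans: assumes "x \<in> carrier G" "y \<in> dc x" "z \<in> dc y" shows "z \<in> dc x"
proof -
  obtain h1 h2 where h: "h1 \<in> H" "h2 \<in> H" "y = h1 \<otimes> x \<otimes> h2" using assms by (auto simp: dc_mem)
  obtain a b where ab: "a \<in> H" "b \<in> H" "z = a \<otimes> y \<otimes> b" using assms by (auto simp: dc_mem)
  have "z = (a \<otimes> h1) \<otimes> x \<otimes> (h2 \<otimes> b)" using h ab Hc assms by (simp add: m_assoc)
  then show ?thesis using h ab Hm by (auto simp: dc_mem)
qed

lemma dc_symm: assumes "x \<in> carrier G" "y \<in> dc x" shows "x \<in> dc y"
proof -
  obtain h1 h2 where h: "h1 \<in> H" "h2 \<in> H" "y = h1 \<otimes> x \<otimes> h2" using assms by (auto simp: dc_mem)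
  have "x = inv h1 \<otimes> y \<otimes> inv h2" using h Hc assms by (simp add: m_assoc)
  then show ?thesis unfolding dc_mem using Hi[OF h(1)] Hi[OF h(2)] by blast
qed

lemma dc_eq: assumes "x \<in> carrier G" "y \<in> dc x" shows "dc y = dc x"
proof -
  have y: "y \<in> carrier G" using dc_sub assms by blast
  show ?thesis using dc_trans[OF assms(1,2)] dc_trans[OF y dc_symm[OF assms]] by blast
qed

lemma dc_inv: assumes "x \<in> carrier G" "y \<in> dc x" shows "inv y \<in> dc (inv x)"
proof -
  obtain h1 h2 where h: "h1 \<in> H" "h2 \<in> H" "y = h1 \<otimes> x \<otimes> h2" using assms by (auto simp: dc_mem)
  have "inv y = inv h2 \<otimes> inv x \<otimes> inv h1" using h Hc assms by (simp add: inv_mult_group m_assoc)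
  then show ?thesis using h Hi by (auto simp: dc_mem)
qed

lemma dc_inv_img: assumes "x \<in> carrier G" shows "dc (inv x) = (\<lambda>z. inv z) ` dc x"
proof
  show "(\<lambda>z. inv z) ` dc x \<subseteq> dc (inv x)" using dc_inv assms by blast
  show "dc (inv x) \<subseteq> (\<lambda>z. inv z) ` dc x"
  proof
    fix z assume "z \<in> dc (inv x)"
    then have "inv z \<in> dc x" using dc_inv[of "inv x" z] assms by simp
    moreover have "z = inv (inv z)" using \<open>z \<in> dc (inv x)\<close> dc_sub[of "inv x"] assms by auto
    ultimately show "z \<in> (\<lambda>z. inv z) ` dc x" by blast
  qed
qed

lemma rcos_dc: assumes "x \<in> carrier G" "y \<in> dc x" shows "H #> y \<subseteq> dc x"
proof
  fix z assume "z \<in> H #> y"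
  then obtain h where h: "h \<in> H" "z = h \<otimes> y" by (auto simp: rcos_mem)
  have "y \<in> carrier G" using dc_sub assms by blast
  then have "z = h \<otimes> y \<otimes> \<one>" using h Hc by simp
  then have "z \<in> dc y" unfolding dc_mem using H1 h(1) by blast
  then show "z \<in> dc x" using dc_eq assms by blast
qed

lemma dc_H: assumes "x \<in> carrier G" "x \<notin> H" shows "dc x \<inter> H = {}"
proof (rule ccontr)
  assume "dc x \<inter> H \<noteq> {}"
  then obtain y where "y \<in> dc x" "y \<in> H" by blast
  then obtain h1 h2 where h: "h1 \<in> H" "h2 \<in> H" "y = h1 \<otimes> x \<otimes> h2" by (auto simp: dc_mem)
  have "x = inv h1 \<otimes> y \<otimes> inv h2" using h Hc assms by (simp add: m_assoc)
  moreover have "inv h1 \<otimes> y \<otimes> inv h2 \<in> H" using h(1,2) \<open>y \<in> H\<close> by (simp add: Hm Hi)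
  ultimately have "x \<in> H" by simp
  then show False using assms by blast
qed

lemma compat: assumes "x \<in> carrier G" "y \<in> carrier G" "y \<in> dc (inv x)"
  shows "\<exists>e\<in>H #> x. inv e \<in> H #> y"
proof -
  obtain h1 h2 where h: "h1 \<in> H" "h2 \<in> H" "y = h1 \<otimes> inv x \<otimes> h2" using assms by (auto simp: dc_mem)
  have c: "h1 \<in> carrier G" "h2 \<in> carrier G" using h Hc by auto
  let ?e = "inv h2 \<otimes> x"
  have "?e \<in> H #> x" using h Hi by (auto simp: rcos_mem)
  moreover have "inv ?e = inv h1 \<otimes> y" using h c assms by (simp add: inv_mult_group m_assoc)
  then have "inv ?e \<in> H #> y" using h Hi by (auto simp: rcos_mem)
  ultimately show ?thesis by blast
qed

definition cos where "cos D = (\<lambda>y. H #> y) ` D"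

lemma finite_dc: "x \<in> carrier G \<Longrightarrow> finite (dc x)"
  using dc_sub finG finite_subset by blast

lemma card_cos: assumes "x \<in> carrier G" shows "card (cos (dc x)) * card H = card (dc x)"
proof -
  have U: "\<Union>(cos (dc x)) = dc x"
  proof
    show "\<Union>(cos (dc x)) \<subseteq> dc x" using rcos_dc assms by (auto simp: cos_def)
    show "dc x \<subseteq> \<Union>(cos (dc x))" using rcos_self dc_sub assms by (auto simp: cos_def)
  qed
  have "card H * card (cos (dc x)) = card (\<Union>(cos (dc x)))"
  proof (rule card_partition)
    show "finite (cos (dc x))" using finite_dc assms by (simp add: cos_def)
    show "finite (\<Union>(cos (dc x)))" using U finite_dc assms by simp
    show "\<And>c. c \<in> cos (dc x) \<Longrightarrow> card c = card H" using card_rcos dc_sub assms by (auto simp: cos_def)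
    show "\<And>c1 c2. c1 \<in> cos (dc x) \<Longrightarrow> c2 \<in> cos (dc x) \<Longrightarrow> c1 \<noteq> c2 \<Longrightarrow> c1 \<inter> c2 = {}"
      using rcos_disj dc_sub assms by (auto simp: cos_def)
  qed
  then show ?thesis using U by (simp add: mult.commute)
qed

lemma card_dc_inv: assumes "x \<in> carrier G" shows "card (dc (inv x)) = card (dc x)"
proof -
  have "inj_on (\<lambda>z. inv z) (dc x)"
  proof (rule inj_onI)
    fix a b assume ab: "a \<in> dc x" "b \<in> dc x" "inv a = inv b"
    have "a \<in> carrier G" "b \<in> carrier G" using ab dc_sub assms by auto
    then show "a = b" using ab(3) by (metis inv_inv)
  qed
  then have "card ((\<lambda>z. inv z) ` dc x) = card (dc x)" by (rule card_image)
  then show ?thesis using dc_inv_img[OF assms] by simp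
qed

lemma card_cos_inv: assumes "x \<in> carrier G" shows "card (cos (dc (inv x))) = card (cos (dc x))"
proof -
  have "card H > 0" using finH H1 card_gt_0_iff by blast
  moreover have "card (cos (dc (inv x))) * card H = card (cos (dc x)) * card H"
    by (simp add: card_cos[OF inv_closed[OF assms]] card_cos[OF assms] card_dc_inv[OF assms])
  ultimately show ?thesis by simp
qed

lemma conj_img: assumes "x \<in> carrier G" shows "x <# H #> inv x = (\<lambda>h. x \<otimes> h \<otimes> inv x) ` H"
  unfolding l_coset_def r_coset_def by auto

lemma norm_eq: "normalizer G H = {g \<in> carrier G. g <# H #> inv g = H}"
  using HG by (simp add: normalizer_def stabilizer_def)

lemma normD: assumes "x \<in> normalizer G H" shows "x \<in> carrier G" "x <# H #> inv x = H"
  using assms unfolding norm_eq by auto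

lemma norm_iff: "x \<in> normalizer G H \<longleftrightarrow> x \<in> carrier G \<and> (\<forall>h\<in>H. x \<otimes> h \<otimes> inv x \<in> H)"
proof
  assume a: "x \<in> normalizer G H"
  have x: "x \<in> carrier G" using normD[OF a] by blast
  have e: "(\<lambda>h. x \<otimes> h \<otimes> inv x) ` H = H" using conj_img[OF x] normD(2)[OF a] by simp
  show "x \<in> carrier G \<and> (\<forall>h\<in>H. x \<otimes> h \<otimes> inv x \<in> H)"
  proof (intro conjI ballI x)
    fix h assume "h \<in> H"
    then have "x \<otimes> h \<otimes> inv x \<in> (\<lambda>h. x \<otimes> h \<otimes> inv x) ` H" by (rule imageI)
    then show "x \<otimes> h \<otimes> inv x \<in> H" using e by simp
  qed
next
  assume a: "x \<in> carrier G \<and> (\<forall>h\<in>H. x \<otimes> h \<otimes> inv x \<in> H)"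
  then have x: "x \<in> carrier G" and a2: "\<And>h. h \<in> H \<Longrightarrow> x \<otimes> h \<otimes> inv x \<in> H" by auto
  have inj: "inj_on (\<lambda>h. x \<otimes> h \<otimes> inv x) H"
  proof (rule inj_onI)
    fix h1 h2 assume h: "h1 \<in> H" "h2 \<in> H" "x \<otimes> h1 \<otimes> inv x = x \<otimes> h2 \<otimes> inv x"
    then show "h1 = h2" using x Hc[OF h(1)] Hc[OF h(2)] by simp
  qed
  have sub: "(\<lambda>h. x \<otimes> h \<otimes> inv x) ` H \<subseteq> H"
  proof (rule image_subsetI)
    fix h assume "h \<in> H" then show "x \<otimes> h \<otimes> inv x \<in> H" by (rule a2)
  qed
  have "(\<lambda>h. x \<otimes> h \<otimes> inv x) ` H = H" using endo_inj_surj[OF finH sub inj] .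
  then have "x <# H #> inv x = H" using conj_img[OF x] by simp
  then show "x \<in> normalizer G H" using x unfolding norm_eq by simp
qed

lemma normD2: assumes "x \<in> normalizer G H" "h \<in> H" shows "inv x \<otimes> h \<otimes> x \<in> H"
proof -
  have x: "x \<in> carrier G" using normD assms by blast
  have "(\<lambda>h. x \<otimes> h \<otimes> inv x) ` H = H" using conj_img[OF x] normD(2)[OF assms(1)] by simp
  then have "h \<in> (\<lambda>h. x \<otimes> h \<otimes> inv x) ` H" using assms(2) by simp
  then obtain h' where h': "h' \<in> H" "h = x \<otimes> h' \<otimes> inv x" by blast
  then have "inv x \<otimes> h \<otimes> x = h'" using x Hc by (simp add: m_assoc)
  then show ?thesis using h' by simp
qed

lemma dc_norm: assumes "x \<in> normalizer G H" shows "dc x = H #> x"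
proof
  have x: "x \<in> carrier G" using normD assms by blast
  show "H #> x \<subseteq> dc x" using rcos_dc dc_self x by blast
  show "dc x \<subseteq> H #> x"
  proof
    fix y assume "y \<in> dc x"
    then obtain h1 h2 where h: "h1 \<in> H" "h2 \<in> H" "y = h1 \<otimes> x \<otimes> h2" by (auto simp: dc_mem)
    have "y = (h1 \<otimes> (x \<otimes> h2 \<otimes> inv x)) \<otimes> x" using h x Hc by (simp add: m_assoc)
    moreover have "x \<otimes> h2 \<otimes> inv x \<in> H" using h(2) assms unfolding norm_iff by blast
    then have "h1 \<otimes> (x \<otimes> h2 \<otimes> inv x) \<in> H" using h(1) Hm by blast
    ultimately show "y \<in> H #> x" unfolding rcos_mem by blast
  qed
qed

lemma rcos_mem': "y \<in> A #> x \<longleftrightarrow> (\<exists>a\<in>A. y = a \<otimes> x)"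
  by (auto simp: r_coset_def)

lemma even_cos: assumes x: "x \<in> carrier G" "x \<notin> normalizer G H" and k: "card H = 2^k"
  shows "even (card (cos (dc x)))"
proof -
  define f where "f h = H #> (x \<otimes> h)" for h
  define K where "K = {k \<in> H. x \<otimes> k \<otimes> inv x \<in> H}"
  have KG: "K \<subseteq> carrier G" using Hc K_def by auto
  have img: "f ` H = cos (dc x)"
  proof
    show "f ` H \<subseteq> cos (dc x)"
    proof
      fix R assume "R \<in> f ` H"
      then obtain h where h: "h \<in> H" "R = f h" by blast
      have "x \<otimes> h = \<one> \<otimes> x \<otimes> h" using x Hc[OF h(1)] by simp
      then have "x \<otimes> h \<in> dc x" unfolding dc_mem using H1 h(1) by blast
      then show "R \<in> cos (dc x)" using h by (simp add: f_def cos_def)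
    qed
    show "cos (dc x) \<subseteq> f ` H"
    proof
      fix R assume "R \<in> cos (dc x)"
      then obtain y where y: "y \<in> dc x" "R = H #> y" by (auto simp: cos_def)
      then obtain h1 h2 where h: "h1 \<in> H" "h2 \<in> H" "y = h1 \<otimes> x \<otimes> h2" by (auto simp: dc_mem)
      have c: "h1 \<in> carrier G" "h2 \<in> carrier G" using h Hc by auto
      have "y \<otimes> inv (x \<otimes> h2) = h1" using h(3) c x by (simp add: inv_mult_group m_assoc)
      then have "H #> y = H #> (x \<otimes> h2)" using rcos_eq y dc_sub x c h(1) by (metis m_closed subsetD)
      then show "R \<in> f ` H" using y h(2) by (auto simp: f_def)
    qed
  qed
  have fib: "{h \<in> H. f h = f h0} = K #> h0" if h0: "h0 \<in> H" for h0
  proof -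
    have h0c: "h0 \<in> carrier G" using Hc h0 by blast
    have eq: "(x \<otimes> h) \<otimes> inv (x \<otimes> h0) = x \<otimes> (h \<otimes> inv h0) \<otimes> inv x" if "h \<in> carrier G" for h
      using that h0c x by (simp add: inv_mult_group m_assoc)
    have ff: "f h = f h0 \<longleftrightarrow> x \<otimes> (h \<otimes> inv h0) \<otimes> inv x \<in> H" if "h \<in> carrier G" for h
      unfolding f_def using rcos_eq[of "x \<otimes> h" "x \<otimes> h0"] eq[OF that] that h0c x by simp
    show ?thesis
    proof
      show "{h \<in> H. f h = f h0} \<subseteq> K #> h0"
      proof
        fix h assume "h \<in> {h \<in> H. f h = f h0}"
        then have h: "h \<in> H" "f h = f h0" by auto
        have "h \<otimes> inv h0 \<in> K" using ff[OF Hc[OF h(1)]] h h0 Hm Hi K_def by auto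
        moreover have "h = (h \<otimes> inv h0) \<otimes> h0" using Hc[OF h(1)] h0c by (simp add: m_assoc)
        ultimately show "h \<in> K #> h0" unfolding rcos_mem' by blast
      qed
      show "K #> h0 \<subseteq> {h \<in> H. f h = f h0}"
      proof
        fix h assume "h \<in> K #> h0"
        then obtain k where kk: "k \<in> K" "h = k \<otimes> h0" unfolding rcos_mem' by blast
        have kH: "k \<in> H" "x \<otimes> k \<otimes> inv x \<in> H" using kk K_def by auto
        have hH: "h \<in> H" using kk(2) kH h0 Hm by simp
        have "h \<otimes> inv h0 = k" using kk(2) Hc[OF kH(1)] h0c by (simp add: m_assoc)
        then have "f h = f h0" using ff[OF Hc[OF hH]] kH by simp
        then show "h \<in> {h \<in> H. f h = f h0}" using hH by simp
      qed
    qed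
  qed
  have cardfib: "card {h \<in> H. f h = R} = card K" if "R \<in> f ` H" for R
  proof -
    obtain h0 where h0: "h0 \<in> H" "R = f h0" using \<open>R \<in> f ` H\<close> by blast
    have "card (K #> h0) = card K"
      using card_rcosets_equal[of "K #> h0" K] KG rcosetsI Hc[OF h0(1)] by auto
    then show ?thesis using fib[OF h0(1)] h0(2) by simp
  qed
  have HU: "H = (\<Union>R\<in>f ` H. {h \<in> H. f h = R})" by blast
  have "card H = (\<Sum>R\<in>f ` H. card {h \<in> H. f h = R})"
  proof -
    have "card (\<Union>R\<in>f ` H. {h \<in> H. f h = R}) = (\<Sum>R\<in>f ` H. card {h \<in> H. f h = R})"
      by (rule card_UN_disjoint) (use finH in auto)
    then show ?thesis using HU by simp
  qed
  also have "\<dots> = (\<Sum>R\<in>f ` H. card K)" using cardfib by (rule sum.cong[OF refl])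
  also have "\<dots> = card (f ` H) * card K" by simp
  finally have "card (cos (dc x)) dvd 2^k" using img k by simp
  moreover have "card (cos (dc x)) \<noteq> 1"
  proof
    assume c1: "card (cos (dc x)) = 1"
    have xin: "H #> x \<in> cos (dc x)" using dc_self x by (auto simp: cos_def)
    have "\<forall>h\<in>H. x \<otimes> h \<otimes> inv x \<in> H"
    proof
      fix h assume h: "h \<in> H"
      have "f h \<in> cos (dc x)" using img h by blast
      then have "f h = H #> x" using c1 xin by (metis card_1_singletonE singletonD)
      then show "x \<otimes> h \<otimes> inv x \<in> H" unfolding f_def using rcos_eq x Hc[OF h] by (metis m_closed)
    qed
    then show False using x norm_iff by blast
  qed
  ultimately show ?thesis
  proof -
    assume d: "card (cos (dc x)) dvd 2^k" and n1: "card (cos (dc x)) \<noteq> 1"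
    show ?thesis
    proof (rule ccontr)
      assume "odd (card (cos (dc x)))"
      then have "coprime (card (cos (dc x))) (2^k)" by simp
      then show False using d n1 by fastforce
    qed
  qed
qed

definition iscos where "iscos R \<longleftrightarrow> (\<exists>y\<in>carrier G. R = H #> y)"

lemma iscos_disj: "iscos R1 \<Longrightarrow> iscos R2 \<Longrightarrow> R1 \<noteq> R2 \<Longrightarrow> z \<in> R1 \<Longrightarrow> z \<notin> R2"
  unfolding iscos_def using rcos_disj by blast

lemma iscos_carrier: "iscos R \<Longrightarrow> R \<subseteq> carrier G"
  unfolding iscos_def using rcos_sub by blast

definition good where "good T S \<longleftrightarrow> S \<subseteq> \<Union>T \<and> (\<forall>s\<in>S. inv s \<in> S) \<and> (\<forall>R\<in>T. \<exists>!s. s \<in> S \<and> s \<in> R)"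

lemma match:
  assumes "finite A"
  shows "finite B \<Longrightarrow> card A = card B \<Longrightarrow> A \<inter> B = {} \<Longrightarrow> (\<forall>R\<in>A\<union>B. iscos R) \<Longrightarrow>
    (\<forall>R\<in>A. \<forall>R'\<in>B. \<exists>e\<in>R. inv e \<in> R') \<Longrightarrow> \<exists>S. good (A \<union> B) S"
  using assms
proof (induction A arbitrary: B rule: finite_induct)
  case empty
  then have "B = {}" by simp
  then show ?case by (auto simp: good_def)
next
  case (insert R A B)
  then have "B \<noteq> {}" by auto
  then obtain R' where R': "R' \<in> B" by blast
  define B' where "B' = B - {R'}"
  have "card A = card B'" using insert R' by (simp add: B'_def)
  moreover have "A \<inter> B' = {}" "\<forall>Q\<in>A \<union> B'. iscos Q" "\<forall>Q\<in>A. \<forall>Q'\<in>B'. \<exists>e\<in>Q. inv e \<in> Q'" "finite B'"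
    using insert.prems by (auto simp: B'_def)
  ultimately obtain S' where S': "good (A \<union> B') S'" using insert.IH by blast
  obtain e where e: "e \<in> R" "inv e \<in> R'" using insert.prems R' by blast
  have cR: "iscos R" and cR': "iscos R'" using insert.prems R' by auto
  have ec: "e \<in> carrier G" using e cR iscos_carrier by blast
  have RR': "R \<noteq> R'" using insert.prems R' by auto
  have RA: "R \<notin> A \<union> B'" using insert.prems insert.hyps R' by (auto simp: B'_def)
  have R'A: "R' \<notin> A \<union> B'" using insert.prems R' by (auto simp: B'_def)
  have cos_all: "\<forall>Q\<in>A \<union> B'. iscos Q" using insert.prems by (auto simp: B'_def)
  have S'sub: "S' \<subseteq> \<Union>(A \<union> B')" using S' unfolding good_def by blast
  define S where "S = S' \<union> {e, inv e}"
  have notR: "s \<notin> R" if "s \<in> S'" for s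
  proof
    assume "s \<in> R"
    from that S'sub obtain Q where Q: "Q \<in> A \<union> B'" "s \<in> Q" by blast
    then have "Q \<noteq> R" using RA by blast
    then show False using iscos_disj[OF cos_all[rule_format, OF Q(1)] cR _ Q(2)] \<open>s \<in> R\<close> by blast
  qed
  have notR': "s \<notin> R'" if "s \<in> S'" for s
  proof
    assume "s \<in> R'"
    from that S'sub obtain Q where Q: "Q \<in> A \<union> B'" "s \<in> Q" by blast
    then have "Q \<noteq> R'" using R'A by blast
    then show False using iscos_disj[OF cos_all[rule_format, OF Q(1)] cR' _ Q(2)] \<open>s \<in> R'\<close> by blast
  qed
  have eR': "e \<notin> R'" using iscos_disj[OF cR cR' RR' e(1)] .
  have ieR: "inv e \<notin> R" using iscos_disj[OF cR' cR _ e(2)] RR' by blast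
  have "good (insert R A \<union> B) S"
    unfolding good_def
  proof (intro conjI ballI)
    show "S \<subseteq> \<Union>(insert R A \<union> B)" using S'sub e R' by (auto simp: S_def B'_def)
    fix s assume "s \<in> S"
    then show "inv s \<in> S" using S' ec by (auto simp: S_def good_def)
  next
    fix Q assume Q: "Q \<in> insert R A \<union> B"
    show "\<exists>!s. s \<in> S \<and> s \<in> Q"
    proof (cases "Q = R")
      case True
      show ?thesis
      proof (rule ex1I[of _ e])
        show "e \<in> S \<and> e \<in> Q" using True e by (simp add: S_def)
        fix s assume "s \<in> S \<and> s \<in> Q"
        then show "s = e" using True notR ieR by (auto simp: S_def)
      qed
    next
      case F1: False
      show ?thesis
      proof (cases "Q = R'")
        case True
        show ?thesis
        proof (rule ex1I[of _ "inv e"])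
          show "inv e \<in> S \<and> inv e \<in> Q" using True e by (simp add: S_def)
          fix s assume "s \<in> S \<and> s \<in> Q"
          then show "s = inv e" using True notR' eR' by (auto simp: S_def)
        qed
      next
        case False
        then have QA: "Q \<in> A \<union> B'" using Q F1 by (auto simp: B'_def)
        then obtain s0 where s0: "s0 \<in> S' \<and> s0 \<in> Q" "\<And>s. s \<in> S' \<and> s \<in> Q \<Longrightarrow> s = s0"
          using S' unfolding good_def by metis
        have cQ: "iscos Q" using cos_all QA by blast
        have "e \<notin> Q" using iscos_disj[OF cR cQ _ e(1)] F1 by metis
        moreover have "inv e \<notin> Q" using iscos_disj[OF cR' cQ _ e(2)] False by metis
        ultimately show ?thesis using s0 by (auto simp: S_def)
      qed
    qed
  qed
  then show ?case by blast
qed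

definition blk where "blk x = dc x \<union> dc (inv x)"

lemma blk_eq: assumes x: "x \<in> carrier G" and y: "y \<in> blk x" shows "blk y = blk x"
proof (cases "y \<in> dc x")
  case True
  have "dc y = dc x" using dc_eq[OF x True] .
  moreover have "dc (inv y) = dc (inv x)" using dc_eq[OF inv_closed[OF x] dc_inv[OF x True]] .
  ultimately show ?thesis by (simp add: blk_def)
next
  case False
  then have y2: "y \<in> dc (inv x)" using y by (simp add: blk_def)
  have "dc y = dc (inv x)" using dc_eq[OF inv_closed[OF x] y2] .
  moreover have "inv y \<in> dc x" using dc_inv[OF inv_closed[OF x] y2] x by simp
  then have "dc (inv y) = dc x" using dc_eq[OF x] by blast
  ultimately show ?thesis by (auto simp: blk_def)
qed

lemma blk_sub: assumes "x \<in> carrier G" "x \<notin> H" shows "blk x \<subseteq> carrier G - H"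
proof -
  have "inv x \<notin> H" using assms Hi by (metis inv_inv)
  then show ?thesis using dc_H[OF assms] dc_H[OF inv_closed[OF assms(1)]] dc_sub[OF inv_closed[OF assms(1)]] dc_sub[OF assms(1)] assms
    by (auto simp: blk_def)
qed

lemma Union_cos_dc: "x \<in> carrier G \<Longrightarrow> \<Union>(cos (dc x)) = dc x"
  using rcos_dc rcos_self dc_sub by (auto simp: cos_def) blast

lemma compat_cos: assumes x: "x \<in> carrier G" and R: "R \<in> cos (dc x)" and R': "R' \<in> cos (dc (inv x))"
  shows "\<exists>e\<in>R. inv e \<in> R'"
proof -
  obtain y where y: "y \<in> dc x" "R = H #> y" using R by (auto simp: cos_def)
  obtain z where z: "z \<in> dc (inv x)" "R' = H #> z" using R' by (auto simp: cos_def)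
  have yc: "y \<in> carrier G" using y dc_sub x by blast
  have zc: "z \<in> carrier G" using z dc_sub x by (meson inv_closed subsetD)
  have "dc (inv y) = dc (inv x)" using dc_eq[OF inv_closed[OF x] dc_inv[OF x y(1)]] .
  then have "z \<in> dc (inv y)" using z by simp
  then show ?thesis using compat[OF yc zc] y z by simp
qed

lemma iscos_cos: "x \<in> carrier G \<Longrightarrow> R \<in> cos (dc x) \<Longrightarrow> iscos R"
  using dc_sub by (auto simp: cos_def iscos_def)

lemma block:
  assumes x: "x \<in> carrier G" "x \<notin> H" and k: "card H = 2^k"
    and hyp: "\<forall>a\<in>normalizer G H - H. a \<otimes> a \<in> H \<longrightarrow> (\<exists>e\<in>H #> a. e \<otimes> e = \<one>)"
  shows "\<exists>S. good (cos (blk x)) S"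
proof -
  have xi: "inv x \<in> carrier G" using x by simp
  have cb: "cos (blk x) = cos (dc x) \<union> cos (dc (inv x))" by (simp add: cos_def blk_def image_Un)
  have fin: "finite (cos (dc x))" "finite (cos (dc (inv x)))"
    using finite_dc x xi by (auto simp: cos_def)
  show ?thesis
  proof (cases "dc x = dc (inv x)")
    case False
    have disj: "cos (dc x) \<inter> cos (dc (inv x)) = {}"
    proof (rule ccontr)
      assume "cos (dc x) \<inter> cos (dc (inv x)) \<noteq> {}"
      then obtain y z where yz: "y \<in> dc x" "z \<in> dc (inv x)" "H #> y = H #> z" by (auto simp: cos_def)
      have "y \<in> carrier G" using yz dc_sub x by blast
      then have "y \<in> H #> z" using yz rcos_self by metis
      then have "y \<in> dc (inv x)" using rcos_dc[OF xi yz(2)] by blast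
      then have "dc x = dc (inv x)" using dc_eq[OF xi] dc_eq[OF x(1) yz(1)] by metis
      then show False using False by blast
    qed
    have "\<exists>S. good (cos (dc x) \<union> cos (dc (inv x))) S"
      by (rule match[OF fin(1) fin(2)])
         (use card_cos_inv[OF x(1)] disj iscos_cos[OF x(1)] iscos_cos[OF xi] x xi compat_cos in auto)
    then show ?thesis using cb by simp
  next
    case True
    note T = True
    show ?thesis
    proof (cases "x \<in> normalizer G H")
      case True
      have dcx: "dc x = H #> x" using dc_norm[OF True] .
      have "inv x \<in> H #> x" using dc_self[OF xi] T dcx by simp
      then obtain h where h: "h \<in> H" "inv x = h \<otimes> x" by (auto simp: rcos_mem)
      have hc: "h \<in> carrier G" using h Hc by blast
      have "h = (h \<otimes> x) \<otimes> inv x" using hc x by (simp add: m_assoc)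
      also have "\<dots> = inv x \<otimes> inv x" using h(2) by simp
      finally have "h = inv x \<otimes> inv x" .
      then have "inv h = x \<otimes> x" using x by (simp add: inv_mult_group)
      then have "x \<otimes> x \<in> H" using h Hi by metis
      then obtain e where e: "e \<in> H #> x" "e \<otimes> e = \<one>" using hyp True x by blast
      have ec: "e \<in> carrier G" using e rcos_sub x by blast
      have ie: "inv e = e" using inv_equality[OF e(2) ec ec] .
      have cx: "cos (blk x) = {H #> x}"
      proof -
        have "cos (blk x) = cos (H #> x)" using cb T dcx by simp
        also have "\<dots> = {H #> x}"
        proof
          show "cos (H #> x) \<subseteq> {H #> x}"
          proof
            fix R assume "R \<in> cos (H #> x)"
            then obtain y where y: "y \<in> H #> x" "R = H #> y" by (auto simp: cos_def)
            then obtain h' where h': "h' \<in> H" "y = h' \<otimes> x" by (auto simp: rcos_mem)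
            have yc: "y \<in> carrier G" using y rcos_sub x by blast
            have "y \<otimes> inv x = h'" using h' x Hc by (simp add: m_assoc)
            then have "H #> y = H #> x" using rcos_eq[OF yc x(1)] h' by simp
            then show "R \<in> {H #> x}" using y by simp
          qed
          show "{H #> x} \<subseteq> cos (H #> x)" using rcos_self x by (auto simp: cos_def)
        qed
        finally show ?thesis .
      qed
      have "good (cos (blk x)) {e}"
        unfolding good_def cx using e ie by auto
      then show ?thesis by blast
    next
      case False
      define Y where "Y = cos (dc x)"
      have ev: "even (card Y)" using even_cos[OF x(1) False k] Y_def by simp
      obtain A where A: "A \<subseteq> Y" "card A = card Y div 2" "finite A"
        using obtain_subset_with_card_n[of "card Y div 2" Y] by auto
      define B where "B = Y - A"
      have finY: "finite Y" using fin Y_def by simp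
      have cB: "card B = card A" using A ev finY by (simp add: B_def card_Diff_subset) (elim evenE; simp)
      have AB: "A \<union> B = Y" "A \<inter> B = {}" using A by (auto simp: B_def)
      have "\<exists>S. good (A \<union> B) S"
      proof (rule match[OF A(3)])
        show "finite B" using finY by (simp add: B_def)
        show "card A = card B" using cB by simp
        show "A \<inter> B = {}" using AB by simp
        show "\<forall>R\<in>A \<union> B. iscos R" using AB iscos_cos x Y_def by auto
        show "\<forall>R\<in>A. \<forall>R'\<in>B. \<exists>e\<in>R. inv e \<in> R'"
        proof (intro ballI)
          fix R R' assume "R \<in> A" "R' \<in> B"
          then have "R \<in> cos (dc x)" "R' \<in> cos (dc (inv x))" using AB T Y_def by auto
          then show "\<exists>e\<in>R. inv e \<in> R'" using compat_cos[OF x(1)] by blast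
        qed
      qed
      then show ?thesis using cb T AB Y_def by simp
    qed
  qed
qed

lemma Union_cos_blk: "x \<in> carrier G \<Longrightarrow> \<Union>(cos (blk x)) = blk x"
proof -
  assume x: "x \<in> carrier G"
  have "cos (blk x) = cos (dc x) \<union> cos (dc (inv x))" by (simp add: cos_def blk_def image_Un)
  then show ?thesis using Union_cos_dc[OF x] Union_cos_dc[OF inv_closed[OF x]] by (simp add: blk_def)
qed

lemma exists_S:
  assumes k: "card H = 2^k"
    and hyp: "\<forall>a\<in>normalizer G H - H. a \<otimes> a \<in> H \<longrightarrow> (\<exists>e\<in>H #> a. e \<otimes> e = \<one>)"
  shows "\<exists>S. S \<subseteq> carrier G - H \<and> (\<forall>s\<in>S. inv s \<in> S) \<and> (\<forall>v\<in>carrier G - H. \<exists>!s. s \<in> S \<and> s \<in> H #> v)"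
proof -
  define SB where "SB B = (SOME S. good (cos B) S)" for B
  have gB: "good (cos (blk x)) (SB (blk x))" if "x \<in> carrier G - H" for x
  proof -
    have "\<exists>S. good (cos (blk x)) S" using block[of x k] that k hyp by blast
    then show ?thesis unfolding SB_def by (rule someI_ex)
  qed
  have SBsub: "SB (blk x) \<subseteq> blk x" if "x \<in> carrier G - H" for x
    using gB[OF that] Union_cos_blk[of x] that unfolding good_def by auto
  define S where "S = (\<Union>x\<in>carrier G - H. SB (blk x))"
  have sub: "S \<subseteq> carrier G - H"
    using SBsub blk_sub unfolding S_def by blast
  have invc: "\<forall>s\<in>S. inv s \<in> S"
  proof
    fix s assume "s \<in> S"
    then obtain x where x: "x \<in> carrier G - H" "s \<in> SB (blk x)" unfolding S_def by blast
    then have "inv s \<in> SB (blk x)" using gB[OF x(1)] unfolding good_def by blast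
    then show "inv s \<in> S" using x(1) unfolding S_def by blast
  qed
  have uniq: "\<exists>!s. s \<in> S \<and> s \<in> H #> v" if v: "v \<in> carrier G - H" for v
  proof -
    have vc: "v \<in> carrier G" using v by blast
    have "H #> v \<in> cos (blk v)" using dc_self[OF vc] by (auto simp: cos_def blk_def)
    then obtain s0 where s0: "s0 \<in> SB (blk v)" "s0 \<in> H #> v"
      and u: "\<And>s. s \<in> SB (blk v) \<and> s \<in> H #> v \<Longrightarrow> s = s0"
      using gB[OF v] unfolding good_def by metis
    show ?thesis
    proof (rule ex1I[of _ s0])
      show "s0 \<in> S \<and> s0 \<in> H #> v" using s0 v unfolding S_def by blast
      fix s assume s: "s \<in> S \<and> s \<in> H #> v"
      then obtain y where y: "y \<in> carrier G - H" "s \<in> SB (blk y)" unfolding S_def by blast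
      have yc: "y \<in> carrier G" using y by blast
      have sb: "s \<in> blk y" using SBsub[OF y(1)] y(2) by blast
      have sc: "s \<in> carrier G" using sb blk_sub[of y] y(1) by blast
      have e1: "blk s = blk y" using blk_eq[OF yc sb] .
      obtain h where h: "h \<in> H" "s = h \<otimes> v" using s by (auto simp: rcos_mem)
      have "inv h \<otimes> s = v" unfolding h(2) using Hc[OF h(1)] vc by (rule canc1)
      then have "v = inv h \<otimes> s" by simp
      then have "v \<in> H #> s" using Hi[OF h(1)] by (auto simp: rcos_mem)
      then have "v \<in> dc s" using rcos_dc[OF sc dc_self[OF sc]] by blast
      then have "v \<in> blk s" by (simp add: blk_def)
      then have "blk v = blk s" by (rule blk_eq[OF sc])
      then have "s \<in> SB (blk v)" using e1 y(2) by simp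
      then show "s = s0" using u s by blast
    qed
  qed
  have "\<forall>v\<in>carrier G - H. \<exists>!s. s \<in> S \<and> s \<in> H #> v" using uniq by (rule ballI)
  then show ?thesis using sub invc by (intro exI[of _ S]) simp
qed

lemma smult_mem: "z \<in> A <#> B \<longleftrightarrow> (\<exists>a\<in>A. \<exists>b\<in>B. z = a \<otimes> b)"
  by (auto simp: set_mult_def)

lemma Efacts:
  assumes an: "a \<in> normalizer G H" and aH: "a \<otimes> a \<in> H"
  shows "subgroup (H \<union> (H #> a)) G" "H <#> generate G {a} = H \<union> (H #> a)"
    "\<And>h1 h2. h1 \<in> H \<Longrightarrow> h2 \<in> H \<Longrightarrow> (h1 \<otimes> a) \<otimes> (h2 \<otimes> a) \<in> H"
proof -
  have ac: "a \<in> carrier G" using normD an by blast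
  have conj: "\<And>h. h \<in> H \<Longrightarrow> a \<otimes> h \<otimes> inv a \<in> H" using an norm_iff by blast
  have conj2: "\<And>h. h \<in> H \<Longrightarrow> inv a \<otimes> h \<otimes> a \<in> H" using normD2 an by blast
  have ia: "inv a \<otimes> inv a \<in> H" using Hi[OF aH] ac by (simp add: inv_mult_group)
  show prod: "\<And>h1 h2. h1 \<in> H \<Longrightarrow> h2 \<in> H \<Longrightarrow> (h1 \<otimes> a) \<otimes> (h2 \<otimes> a) \<in> H"
  proof -
    fix h1 h2 assume h: "h1 \<in> H" "h2 \<in> H"
    have "(h1 \<otimes> a) \<otimes> (h2 \<otimes> a) = h1 \<otimes> (a \<otimes> h2 \<otimes> inv a) \<otimes> (a \<otimes> a)"
      using Hc[OF h(1)] Hc[OF h(2)] ac by (simp add: m_assoc)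
    then show "(h1 \<otimes> a) \<otimes> (h2 \<otimes> a) \<in> H" using h conj aH Hm by simp
  qed
  show sg: "subgroup (H \<union> (H #> a)) G"
  proof (rule subgroupI)
    show "H \<union> (H #> a) \<subseteq> carrier G" using HG rcos_sub[OF ac] by (rule Un_least)
    show "H \<union> (H #> a) \<noteq> {}" using H1 by blast
  next
    fix x assume x: "x \<in> H \<union> (H #> a)"
    show "inv x \<in> H \<union> (H #> a)"
    proof (cases "x \<in> H")
      case True then show ?thesis using Hi by blast
    next
      case False
      then have "x \<in> H #> a" using x by blast
      then obtain h where h: "h \<in> H" "x = h \<otimes> a" by (auto simp: rcos_mem)
      have "inv x = ((inv a \<otimes> inv h \<otimes> a) \<otimes> (inv a \<otimes> inv a)) \<otimes> a"
        using Hc[OF h(1)] ac h(2) by (simp add: m_assoc inv_mult_group)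
      moreover have "(inv a \<otimes> inv h \<otimes> a) \<otimes> (inv a \<otimes> inv a) \<in> H"
        using conj2[OF Hi[OF h(1)]] ia Hm by blast
      ultimately show ?thesis by (auto simp: rcos_mem)
    qed
  next
    fix x y assume x: "x \<in> H \<union> (H #> a)" and y: "y \<in> H \<union> (H #> a)"
    show "x \<otimes> y \<in> H \<union> (H #> a)"
    proof (cases "x \<in> H")
      case xH: True
      show ?thesis
      proof (cases "y \<in> H")
        case True then show ?thesis using xH Hm by blast
      next
        case False
        then obtain h where h: "h \<in> H" "y = h \<otimes> a" using y by (auto simp: rcos_mem)
        have "x \<otimes> y = (x \<otimes> h) \<otimes> a" using h Hc[OF h(1)] Hc[OF xH] ac by (simp add: m_assoc)
        then show ?thesis using Hm[OF xH h(1)] by (auto simp: rcos_mem)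
      qed
    next
      case xF: False
      then obtain h1 where h1: "h1 \<in> H" "x = h1 \<otimes> a" using x by (auto simp: rcos_mem)
      show ?thesis
      proof (cases "y \<in> H")
        case True
        have "x \<otimes> y = (h1 \<otimes> (a \<otimes> y \<otimes> inv a)) \<otimes> a"
          using h1 Hc[OF h1(1)] Hc[OF True] ac by (simp add: m_assoc)
        moreover have "h1 \<otimes> (a \<otimes> y \<otimes> inv a) \<in> H" using h1(1) conj[OF True] Hm by blast
        ultimately show ?thesis by (auto simp: rcos_mem)
      next
        case False
        then obtain h2 where h2: "h2 \<in> H" "y = h2 \<otimes> a" using y by (auto simp: rcos_mem)
        show ?thesis using prod[OF h1(1) h2(1)] h1(2) h2(2) by simp
      qed
    qed
  qed
  have aE: "a \<in> H #> a" using rcos_self ac by blast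
  have gen: "generate G {a} \<subseteq> H \<union> (H #> a)"
    using generate_subgroup_incl[OF _ sg] aE by blast
  show "H <#> generate G {a} = H \<union> (H #> a)"
  proof
    show "H <#> generate G {a} \<subseteq> H \<union> (H #> a)"
    proof
      fix z assume "z \<in> H <#> generate G {a}"
      then obtain h g where hg: "h \<in> H" "g \<in> generate G {a}" "z = h \<otimes> g" by (auto simp: smult_mem)
      have "g \<in> H \<union> (H #> a)" using gen hg by blast
      moreover have "h \<in> H \<union> (H #> a)" using hg by blast
      ultimately show "z \<in> H \<union> (H #> a)" using subgroup.m_closed[OF sg] hg by blast
    qed
    show "H \<union> (H #> a) \<subseteq> H <#> generate G {a}"
    proof
      fix z assume z: "z \<in> H \<union> (H #> a)"
      show "z \<in> H <#> generate G {a}"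
      proof (cases "z \<in> H")
        case True
        then have "z = z \<otimes> \<one>" using Hc by simp
        then show ?thesis using \<open>z \<in> H\<close> generate.one[of G "{a}"] unfolding smult_mem by blast
      next
        case False
        then have "z \<in> H #> a" using z by blast
        then obtain h where "h \<in> H" "z = h \<otimes> a" by (auto simp: rcos_mem)
        then show ?thesis using generate.incl[of a "{a}" G] unfolding smult_mem by blast
      qed
    qed
  qed
qed

lemma fwd:
  assumes cs: "cayley_set G S" and pc: "cay_perfect_code G S H"
    and an: "a \<in> normalizer G H" and aH: "a \<notin> H" and aa: "a \<otimes> a \<in> H"
  shows "\<exists>L. is_complement G (H <#> generate G {a}) H L"
proof -
  have ac: "a \<in> carrier G" using normD an by blast
  have Sc: "S \<subseteq> carrier G - {\<one>}" and Si: "\<And>s. s \<in> S \<Longrightarrow> inv s \<in> S" using cs unfolding cayley_set_def by auto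
  have iaH: "inv a \<notin> H" using aH Hi ac by (metis inv_inv)
  have iac: "inv a \<in> carrier G - H" using iaH ac by simp
  have ex1: "\<exists>!c. c \<in> H \<and> cay_adj G S (inv a) c" using pc iac unfolding cay_perfect_code_def by blast
  then obtain c where c: "c \<in> H" "cay_adj G S (inv a) c"
    and cu: "\<And>c'. c' \<in> H \<Longrightarrow> cay_adj G S (inv a) c' \<Longrightarrow> c' = c" by metis
  obtain s where s: "s \<in> S" "c = s \<otimes> inv a" using c(2) unfolding cay_adj_def by blast
  have sc: "s \<in> carrier G" "s \<noteq> \<one>" using Sc s by auto
  have cc: "c \<in> carrier G" using Hc c by blast
  have sca: "s = c \<otimes> a" using s(2) sc ac by (simp add: m_assoc)
  define c' where "c' = inv s \<otimes> inv a"
  have "c' = (inv a \<otimes> inv c \<otimes> a) \<otimes> (inv a \<otimes> inv a)"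
    unfolding c'_def sca using cc ac by (simp add: m_assoc inv_mult_group)
  moreover have "inv a \<otimes> inv c \<otimes> a \<in> H" using normD2[OF an Hi[OF c(1)]] .
  moreover have "inv a \<otimes> inv a \<in> H" using Hi[OF aa] ac by (simp add: inv_mult_group)
  ultimately have c'H: "c' \<in> H" using Hm by simp
  have "cay_adj G S (inv a) c'"
    unfolding cay_adj_def c'_def using Si[OF s(1)] sc ac by auto
  then have "c' = c" using cu c'H by blast
  then have "inv s \<otimes> inv a = s \<otimes> inv a" using s(2) c'_def by simp
  then have sinv: "inv s = s" using sc ac by simp
  have ss: "s \<otimes> s = \<one>" using sinv sc by (metis r_inv)
  have sH: "s \<notin> H"
  proof
    assume "s \<in> H"
    then have "inv c \<otimes> s \<in> H" using Hi[OF c(1)] Hm by blast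
    moreover have "inv c \<otimes> s = a" using sca cc ac by simp
    ultimately show False using aH by simp
  qed
  note E = Efacts[OF an aa]
  define L where "L = {\<one>, s}"
  have "is_complement G (H <#> generate G {a}) H L"
    unfolding is_complement_def
  proof (intro conjI)
    show "subgroup L G"
    proof (rule subgroupI)
      show "L \<subseteq> carrier G" using sc by (auto simp: L_def)
      show "L \<noteq> {}" by (simp add: L_def)
      fix x assume "x \<in> L" then show "inv x \<in> L" using sinv by (auto simp: L_def)
    next
      fix x y assume "x \<in> L" "y \<in> L" then show "x \<otimes> y \<in> L" using ss sc by (auto simp: L_def)
    qed
    have "s \<in> H #> a" using sca c(1) by (auto simp: rcos_mem)
    then show "L \<subseteq> H <#> generate G {a}" using E(2) H1 by (auto simp: L_def)
    show "H \<inter> L = {\<one>}" using sH H1 by (auto simp: L_def)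
    show "H <#> L = H <#> generate G {a}"
    proof -
      have "H <#> L = H \<union> (H #> a)"
      proof
        show "H <#> L \<subseteq> H \<union> (H #> a)"
        proof
          fix z assume "z \<in> H <#> L"
          then obtain h l where hl: "h \<in> H" "l \<in> L" "z = h \<otimes> l" by (auto simp: smult_mem)
          show "z \<in> H \<union> (H #> a)"
          proof (cases "l = \<one>")
            case True then show ?thesis using hl Hc by simp
          next
            case False
            then have "l = s" using hl by (auto simp: L_def)
            then have "z = (h \<otimes> c) \<otimes> a" using hl sca Hc[OF hl(1)] cc ac by (simp add: m_assoc)
            then show ?thesis using Hm[OF hl(1) c(1)] by (auto simp: rcos_mem)
          qed
        qed
        show "H \<union> (H #> a) \<subseteq> H <#> L"
        proof
          fix z assume z: "z \<in> H \<union> (H #> a)"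
          show "z \<in> H <#> L"
          proof (cases "z \<in> H")
            case True
            then have "z = z \<otimes> \<one>" using Hc by simp
            then show ?thesis using True unfolding smult_mem L_def by blast
          next
            case False
            then obtain h where h: "h \<in> H" "z = h \<otimes> a" using z by (auto simp: rcos_mem)
            have "z = (h \<otimes> inv c) \<otimes> s" using h sca Hc[OF h(1)] cc ac by (simp add: m_assoc)
            moreover have "h \<otimes> inv c \<in> H" using Hm[OF h(1) Hi[OF c(1)]] .
            ultimately show ?thesis unfolding smult_mem L_def by blast
          qed
        qed
      qed
      then show ?thesis using E(2) by simp
    qed
  qed
  then show ?thesis by blast
qed

lemma bwd:
  assumes k: "card H = 2^k"
    and hyp: "\<forall>a \<in> normalizer G H - H. a \<otimes> a \<in> H \<longrightarrow> (\<exists>L. is_complement G (H <#> generate G {a}) H L)"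
  shows "subgroup_perfect_code G H"
proof -
  have hyp2: "\<forall>a\<in>normalizer G H - H. a \<otimes> a \<in> H \<longrightarrow> (\<exists>e\<in>H #> a. e \<otimes> e = \<one>)"
  proof (intro ballI impI)
    fix a assume a: "a \<in> normalizer G H - H" and aa: "a \<otimes> a \<in> H"
    have an: "a \<in> normalizer G H" and aH: "a \<notin> H" using a by auto
    have ac: "a \<in> carrier G" using normD an by blast
    obtain L where L: "is_complement G (H <#> generate G {a}) H L" using hyp a aa by blast
    have Ls: "subgroup L G" "H \<inter> L = {\<one>}" "H <#> L = H <#> generate G {a}"
      using L unfolding is_complement_def by auto
    note E = Efacts[OF an aa]
    have "a \<in> H #> a" using rcos_self ac by blast
    then have "a \<in> H <#> L" using Ls(3) E(2) by simp
    then obtain h l where hl: "h \<in> H" "l \<in> L" "a = h \<otimes> l" by (auto simp: smult_mem)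
    have lc: "l \<in> carrier G" using hl(2) subgroup.subset[OF Ls(1)] by blast
    have hc: "h \<in> carrier G" using Hc hl by blast
    have l: "l = inv h \<otimes> a" using hl(3) lc hc by simp
    then have le: "l \<in> H #> a" using Hi[OF hl(1)] by (auto simp: rcos_mem)
    have "l \<otimes> l \<in> H" using E(3)[OF Hi[OF hl(1)] Hi[OF hl(1)]] l by simp
    moreover have "l \<otimes> l \<in> L" using subgroup.m_closed[OF Ls(1) hl(2) hl(2)] .
    ultimately have "l \<otimes> l = \<one>" using Ls(2) by blast
    then show "\<exists>e\<in>H #> a. e \<otimes> e = \<one>" using le by blast
  qed
  obtain S where S: "S \<subseteq> carrier G - H" "\<forall>s\<in>S. inv s \<in> S"
    and uq: "\<forall>v\<in>carrier G - H. \<exists>!s. s \<in> S \<and> s \<in> H #> v"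
    using exists_S[OF k hyp2] by blast
  have cs: "cayley_set G S" unfolding cayley_set_def using S H1 by auto
  have pc: "cay_perfect_code G S H"
    unfolding cay_perfect_code_def
  proof (intro conjI ballI)
    show "H \<subseteq> carrier G" by (rule HG)
  next
    fix x y assume xy: "x \<in> H" "y \<in> H"
    show "\<not> cay_adj G S x y"
    proof
      assume "cay_adj G S x y"
      then obtain s where s: "s \<in> S" "y = s \<otimes> x" unfolding cay_adj_def by blast
      have sc: "s \<in> carrier G" using s S by blast
      have "s = y \<otimes> inv x" using s(2) sc Hc[OF xy(1)] by (simp add: m_assoc)
      then have "s \<in> H" using xy Hm Hi by simp
      then show False using s S by blast
    qed
  next
    fix v assume v: "v \<in> carrier G - H"
    have vc: "v \<in> carrier G" using v by blast
    have iv: "inv v \<in> carrier G - H" using v Hi by (metis DiffD1 DiffD2 DiffI inv_closed inv_inv)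
    obtain s0 where s0: "s0 \<in> S" "s0 \<in> H #> inv v"
      and u: "\<And>s. s \<in> S \<and> s \<in> H #> inv v \<Longrightarrow> s = s0" using uq iv by metis
    have s0c: "s0 \<in> carrier G" using s0 S by blast
    show "\<exists>!c. c \<in> H \<and> cay_adj G S v c"
    proof (rule ex1I[of _ "s0 \<otimes> v"])
      obtain h where h: "h \<in> H" "s0 = h \<otimes> inv v" using s0(2) by (auto simp: rcos_mem)
      have "s0 \<otimes> v = h" using h(2) Hc[OF h(1)] vc by (simp add: m_assoc)
      then have "s0 \<otimes> v \<in> H" using h by simp
      moreover have "cay_adj G S v (s0 \<otimes> v)" unfolding cay_adj_def using vc s0c s0(1) by auto
      ultimately show "s0 \<otimes> v \<in> H \<and> cay_adj G S v (s0 \<otimes> v)" by blast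
    next
      fix c assume c: "c \<in> H \<and> cay_adj G S v c"
      then obtain s where s: "s \<in> S" "c = s \<otimes> v" unfolding cay_adj_def by blast
      have sc: "s \<in> carrier G" using s S by blast
      have "s = c \<otimes> inv v" using s(2) sc vc by (simp add: m_assoc)
      then have "s \<in> H #> inv v" using c by (auto simp: rcos_mem)
      then have "s = s0" using u s(1) by blast
      then show "c = s0 \<otimes> v" using s(2) by simp
    qed
  qed
  show ?thesis unfolding subgroup_perfect_code_def using cs pc by blast
qed
end

theorem theorem3p1:
  fixes G (structure) and H :: "'a set"
  assumes "group G" and "finite (carrier G)"
    and "subgroup H G" and "\<exists>k::nat. card H = 2 ^ k"
  shows "subgroup_perfect_code G H \<longleftrightarrow>
    (\<forall>a \<in> normalizer G H - H. a \<otimes> a \<in> H \<longrightarrow>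
       (\<exists>L. is_complement G (H <#> generate G {a}) H L))"
proof -
  interpret P: pcode G H
    using assms by (simp add: pcode_def pcode_axioms_def)
  obtain k where k: "card H = 2 ^ k" using assms(4) by blast
  show ?thesis
  proof
    assume "subgroup_perfect_code G H"
    then obtain S where S: "cayley_set G S" "cay_perfect_code G S H"
      unfolding subgroup_perfect_code_def by blast
    show "\<forall>a \<in> normalizer G H - H. a \<otimes> a \<in> H \<longrightarrow> (\<exists>L. is_complement G (H <#> generate G {a}) H L)"
      using P.fwd[OF S] by blast
  next
    assume "\<forall>a \<in> normalizer G H - H. a \<otimes> a \<in> H \<longrightarrow> (\<exists>L. is_complement G (H <#> generate G {a}) H L)"
    then show "subgroup_perfect_code G H" using P.bwd[OF k] by blast
  qed
qed

end
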